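(* Let $\mathcal A$ be an S-ring over a finite group $G$ and $H$ a normal subgroup of $G$ with $H\in\mathcal H(\mathcal A)$. Let $\mathcal A'$ be the S-ring over $G$ generated by $\mathcal A$ and the cosets of $G$ by $H$, and let $H'=\{x\mapsto xh:\ h\in H\}$. Then $\mathrm{Aut}(\mathcal A)$ normalizes the group $\langle\mathrm{Aut}(\mathcal A'),H'\rangle$.
   Context: An S-ring over a finite group $G$ is a subring $\mathcal A$ of $\mathbb Z[G]$ with $\mathbb Z$-basis $\{\sum_{x\in X}x: X\in\mathcal S(\mathcal A)\}$ for a partition $\mathcal S(\mathcal A)$ of $G$ into nonempty basic sets with $\{1\}\in\mathcal S(\mathcal A)$ and $X\in\mathcal S(\mathcal A)\Rightarrow X^{-1}\in\mathcal S(\mathcal A)$; $\mathcal S^*(\mathcal A)$ is the set of unions of basic sets and $\mathcal H(\mathcal A)$ the set of subgroups of $G$ lying in $\mathcal S^*(\mathcal A)$. The S-ring generated by $\mathcal A$ and sets $Y_j$ is the smallest S-ring $\mathcal A'$ with $\mathcal S^*(\mathcal A)\cup\{Y_j\}\subseteq\mathcal S^*(\mathcal A')$. For $X\subseteq G$ let $R_G(X)=\{(g,xg): g\in G, x\in X\}$. The Cayley scheme of $\mathcal A$ is the partition $\{R_G(X): X\in\mathcal S(\mathcal A)\}$ of $G\times G$; $\mathrm{Aut}(\mathcal A)$ is the group of permutations $f$ of $G$ with $1^f=1$ and $R_G(X)^f=R_G(X)$ for all $X\in\mathcal S(\mathcal A)$. *)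

theory Defs
  imports "HOL-Algebra.Algebra"
begin

text \<open>S-rings over a finite group G, represented by their partition S(A) into basic sets.
The condition that the W-span of the basic-set sums is closed under multiplication is
written out literally: for basic sets U, V, the coefficient of z in the product
(sum U)(sum V), namely the number of pairs (x,y) in U x V with x y = z, is constant
on every basic set W.\<close>

definition inv_set_sr :: "('a, 'b) monoid_scheme \<Rightarrow> 'a set \<Rightarrow> 'a set" where
  "inv_set_sr G U = (\<lambda>x. m_inv G x) ` U"

definition is_sring :: "('a, 'b) monoid_scheme \<Rightarrow> 'a set set \<Rightarrow> bool" where
  "is_sring G S \<longleftrightarrow>
     (\<forall>U\<in>S. U \<noteq> {}) \<and>
     (\<forall>U\<in>S. \<forall>V\<in>S. U \<noteq> V \<longrightarrow> U \<inter> V = {}) \<and>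
     \<Union>S = carrier G \<and>
     {one G} \<in> S \<and>
     (\<forall>U\<in>S. inv_set_sr G U \<in> S) \<and>
     (\<forall>U\<in>S. \<forall>V\<in>S. \<forall>W\<in>S. \<forall>z1\<in>W. \<forall>z2\<in>W.
        card {(x, y). x \<in> U \<and> y \<in> V \<and> monoid.mult G x y = z1}
      = card {(x, y). x \<in> U \<and> y \<in> V \<and> monoid.mult G x y = z2})"

definition sstar :: "'a set set \<Rightarrow> 'a set set" where
  "sstar S = {\<Union>T | T. T \<subseteq> S}"

definition sring_subgroups :: "('a, 'b) monoid_scheme \<Rightarrow> 'a set set \<Rightarrow> 'a set set" where
  "sring_subgroups G S = {H. subgroup H G \<and> H \<in> sstar S}"

definition sring_generated_by ::
  "('a, 'b) monoid_scheme \<Rightarrow> 'a set set \<Rightarrow> 'a set set \<Rightarrow> 'a set set \<Rightarrow> bool" where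
  "sring_generated_by G S Ys S' \<longleftrightarrow>
     is_sring G S' \<and> sstar S \<union> Ys \<subseteq> sstar S' \<and>
     (\<forall>S''. is_sring G S'' \<and> sstar S \<union> Ys \<subseteq> sstar S'' \<longrightarrow> sstar S' \<subseteq> sstar S'')"

definition cayley_rel :: "('a, 'b) monoid_scheme \<Rightarrow> 'a set \<Rightarrow> ('a \<times> 'a) set" where
  "cayley_rel G U = {(g, monoid.mult G x g) | g x. g \<in> carrier G \<and> x \<in> U}"

definition sring_aut :: "('a, 'b) monoid_scheme \<Rightarrow> 'a set set \<Rightarrow> ('a \<Rightarrow> 'a) set" where
  "sring_aut G S = {f \<in> carrier (BijGroup (carrier G)).
     f (one G) = one G \<and>
     (\<forall>U\<in>S. (\<lambda>(a, b). (f a, f b)) ` cayley_rel G U = cayley_rel G U)}"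

definition right_transl :: "('a, 'b) monoid_scheme \<Rightarrow> 'a set \<Rightarrow> ('a \<Rightarrow> 'a) set" where
  "right_transl G H = {(\<lambda>x\<in>carrier G. monoid.mult G x h) | h. h \<in> H}"

end

theory Submission
  imports Defs
begin


definition img :: "('a \<Rightarrow> 'a) \<Rightarrow> ('a \<times> 'a) set \<Rightarrow> ('a \<times> 'a) set" where
  "img f R = (\<lambda>(a, b). (f a, f b)) ` R"

definition schA :: "('a, 'b) monoid_scheme \<Rightarrow> 'a set set \<Rightarrow> ('a \<Rightarrow> 'a) set" where
  "schA G S = {f \<in> carrier (BijGroup (carrier G)).
     (\<forall>U\<in>S. img f (cayley_rel G U) = cayley_rel G U)}"

definition rho :: "('a, 'b) monoid_scheme \<Rightarrow> 'a \<Rightarrow> ('a \<Rightarrow> 'a)" where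
  "rho G g = (\<lambda>x\<in>carrier G. x \<otimes>\<^bsub>G\<^esub> g)"

lemma sring_aut_eq: "sring_aut G S = {f \<in> schA G S. f \<one>\<^bsub>G\<^esub> = \<one>\<^bsub>G\<^esub>}"
  unfolding sring_aut_def schA_def img_def by auto

lemma cayley_Union: "cayley_rel G (\<Union>T) = (\<Union>U\<in>T. cayley_rel G U)"
  unfolding cayley_rel_def by blast

lemma img_Union: "img f (\<Union>A) = (\<Union>R\<in>A. img f R)"
  unfolding img_def by blast

context group begin

abbreviation "BG \<equiv> BijGroup (carrier G)"

lemma BG_group: "group BG" by (rule group_BijGroup)

lemma BG_D:
  assumes "s \<in> carrier BG"
  shows "bij_betw s (carrier G) (carrier G)" "s \<in> extensional (carrier G)"
    "\<And>x. x \<in> carrier G \<Longrightarrow> s x \<in> carrier G"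
  using assms by (auto simp: BijGroup_def Bij_def bij_betw_def)

lemma BG_mult_apply:
  assumes "s \<in> carrier BG" "t \<in> carrier BG" "x \<in> carrier G"
  shows "(s \<otimes>\<^bsub>BG\<^esub> t) x = s (t x)"
  using assms by (simp add: BijGroup_def compose_def)

lemma BG_one_apply: "x \<in> carrier G \<Longrightarrow> \<one>\<^bsub>BG\<^esub> x = x"
  by (simp add: BijGroup_def)

lemma BG_inv_apply:
  assumes "s \<in> carrier BG" "x \<in> carrier G"
  shows "(inv\<^bsub>BG\<^esub> s) (s x) = x" "s ((inv\<^bsub>BG\<^esub> s) x) = x" "(inv\<^bsub>BG\<^esub> s) x \<in> carrier G"
proof -
  have b: "bij_betw s (carrier G) (carrier G)" using BG_D(1)[OF assms(1)] .
  have sB: "s \<in> Bij (carrier G)" using assms(1) by (simp add: BijGroup_def)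
  have e: "inv\<^bsub>BG\<^esub> s = (\<lambda>x \<in> carrier G. (inv_into (carrier G) s) x)"
    using inv_BijGroup[OF sB] .
  show "(inv\<^bsub>BG\<^esub> s) (s x) = x" using b assms e BG_D(3)[OF assms(1) assms(2)]
    by (simp add: bij_betw_imp_funcset funcset_mem bij_betw_inv_into_left)
  show "s ((inv\<^bsub>BG\<^esub> s) x) = x" using b assms e
    by (simp add: bij_betw_inv_into_right)
  show "(inv\<^bsub>BG\<^esub> s) x \<in> carrier G" using b assms e
    by (simp add: bij_betw_def inv_into_into)
qed

lemma BG_eqI:
  assumes "s \<in> carrier BG" "t \<in> carrier BG" "\<And>x. x \<in> carrier G \<Longrightarrow> s x = t x"
  shows "s = t"
  using BG_D(2)[OF assms(1)] BG_D(2)[OF assms(2)] assms(3) by (rule extensionalityI)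

lemma rho_in:
  assumes "g \<in> carrier G" shows "rho G g \<in> carrier BG"
proof -
  have "bij_betw (rho G g) (carrier G) (carrier G)"
  proof (rule bij_betwI')
    fix x y assume "x \<in> carrier G" "y \<in> carrier G"
    then show "(rho G g x = rho G g y) = (x = y)" using assms by (simp add: rho_def)
  next
    fix x assume "x \<in> carrier G" then show "rho G g x \<in> carrier G" using assms by (simp add: rho_def)
  next
    fix y assume y: "y \<in> carrier G"
    then have "y = rho G g (y \<otimes> inv g)" using assms by (simp add: rho_def m_assoc)
    then show "\<exists>x\<in>carrier G. y = rho G g x" using y assms by blast
  qed
  then show ?thesis by (simp add: BijGroup_def Bij_def rho_def)
qed

lemma rho_apply: "x \<in> carrier G \<Longrightarrow> rho G g x = x \<otimes> g"
  by (simp add: rho_def)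

lemma mem_cayley:
  assumes "U \<subseteq> carrier G"
  shows "(a, b) \<in> cayley_rel G U \<longleftrightarrow> a \<in> carrier G \<and> b \<in> carrier G \<and> b \<otimes> inv a \<in> U"
proof
  assume "(a, b) \<in> cayley_rel G U"
  then obtain x where "a \<in> carrier G" "x \<in> U" "b = x \<otimes> a" unfolding cayley_rel_def by auto
  then show "a \<in> carrier G \<and> b \<in> carrier G \<and> b \<otimes> inv a \<in> U"
    using assms by (auto simp: m_assoc)
next
  assume h: "a \<in> carrier G \<and> b \<in> carrier G \<and> b \<otimes> inv a \<in> U"
  then have "b = (b \<otimes> inv a) \<otimes> a" by (simp add: m_assoc)
  then show "(a, b) \<in> cayley_rel G U" using h unfolding cayley_rel_def by blast
qed

lemma cayley_sub: "U \<subseteq> carrier G \<Longrightarrow> cayley_rel G U \<subseteq> carrier G \<times> carrier G"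
  using mem_cayley by auto

lemma img_mult:
  assumes "s \<in> carrier BG" "t \<in> carrier BG" "R \<subseteq> carrier G \<times> carrier G"
  shows "img (s \<otimes>\<^bsub>BG\<^esub> t) R = img s (img t R)"
proof -
  have 1: "img s (img t R) = (\<lambda>p. (s (t (fst p)), s (t (snd p)))) ` R"
    unfolding img_def split_def image_image by simp
  have 2: "img (s \<otimes>\<^bsub>BG\<^esub> t) R = (\<lambda>p. (s (t (fst p)), s (t (snd p)))) ` R"
    unfolding img_def split_def
  proof (rule image_cong[OF refl])
    fix p assume "p \<in> R"
    then have "fst p \<in> carrier G" "snd p \<in> carrier G" using assms(3) by auto
    then show "((s \<otimes>\<^bsub>BG\<^esub> t) (fst p), (s \<otimes>\<^bsub>BG\<^esub> t) (snd p)) = (s (t (fst p)), s (t (snd p)))"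
      using assms by (simp add: BG_mult_apply)
  qed
  show ?thesis using 1 2 by simp
qed

lemma img_one:
  assumes "R \<subseteq> carrier G \<times> carrier G" shows "img \<one>\<^bsub>BG\<^esub> R = R"
proof -
  have "img \<one>\<^bsub>BG\<^esub> R = (\<lambda>p. p) ` R"
    unfolding img_def split_def
  proof (rule image_cong[OF refl])
    fix p assume "p \<in> R"
    then have "fst p \<in> carrier G" "snd p \<in> carrier G" using assms by auto
    then show "(\<one>\<^bsub>BG\<^esub> (fst p), \<one>\<^bsub>BG\<^esub> (snd p)) = p"
      by (simp add: BG_one_apply)
  qed
  then show ?thesis by simp
qed

lemma img_eqI:
  assumes "s \<in> carrier BG" "R \<subseteq> carrier G \<times> carrier G"
    and "\<And>a b. (a, b) \<in> R \<Longrightarrow> (s a, s b) \<in> R"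
    and "\<And>a b. (a, b) \<in> R \<Longrightarrow> ((inv\<^bsub>BG\<^esub> s) a, (inv\<^bsub>BG\<^esub> s) b) \<in> R"
  shows "img s R = R"
proof
  show "img s R \<subseteq> R" using assms(3) unfolding img_def by auto
  show "R \<subseteq> img s R"
  proof
    fix p assume p: "p \<in> R"
    obtain a b where ab: "p = (a, b)" by (cases p)
    have c: "a \<in> carrier G" "b \<in> carrier G" using p ab assms(2) by auto
    have "((inv\<^bsub>BG\<^esub> s) a, (inv\<^bsub>BG\<^esub> s) b) \<in> R" using assms(4) p ab by auto
    moreover have "(a, b) = (s ((inv\<^bsub>BG\<^esub> s) a), s ((inv\<^bsub>BG\<^esub> s) b))"
      using c BG_inv_apply(2)[OF assms(1)] by auto
    ultimately show "p \<in> img s R" unfolding img_def ab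
      by (intro image_eqI[of _ _ "((inv\<^bsub>BG\<^esub> s) a, (inv\<^bsub>BG\<^esub> s) b)"]) auto
  qed
qed

lemma schA_one:
  assumes "\<forall>U\<in>S. U \<subseteq> carrier G" shows "\<one>\<^bsub>BG\<^esub> \<in> schA G S"
  using assms BG_group by (auto simp: schA_def img_one cayley_sub group.is_monoid monoid.one_closed)

lemma schA_mult:
  assumes "\<forall>U\<in>S. U \<subseteq> carrier G" "s \<in> schA G S" "t \<in> schA G S"
  shows "s \<otimes>\<^bsub>BG\<^esub> t \<in> schA G S"
  using assms BG_group by (auto simp: schA_def img_mult cayley_sub group.is_monoid monoid.m_closed)

lemma schA_inv:
  assumes "\<forall>U\<in>S. U \<subseteq> carrier G" "s \<in> schA G S"
  shows "inv\<^bsub>BG\<^esub> s \<in> schA G S"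
proof -
  have s: "s \<in> carrier BG" using assms by (simp add: schA_def)
  have i: "inv\<^bsub>BG\<^esub> s \<in> carrier BG" using s BG_group by (simp add: group.inv_closed)
  have "img (inv\<^bsub>BG\<^esub> s) (cayley_rel G U) = cayley_rel G U" if U: "U \<in> S" for U
  proof -
    have "img (inv\<^bsub>BG\<^esub> s) (cayley_rel G U) = img (inv\<^bsub>BG\<^esub> s) (img s (cayley_rel G U))"
      using assms U by (simp add: schA_def)
    also have "\<dots> = img (inv\<^bsub>BG\<^esub> s \<otimes>\<^bsub>BG\<^esub> s) (cayley_rel G U)"
      using img_mult[OF i s cayley_sub] assms U by auto
    also have "\<dots> = cayley_rel G U" using BG_group s img_one cayley_sub assms U
      by (simp add: group.l_inv)
    finally show ?thesis .
  qed
  then show ?thesis using i by (simp add: schA_def)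
qed

lemma schA_sstar:
  assumes "s \<in> schA G S" "U \<in> sstar S"
  shows "img s (cayley_rel G U) = cayley_rel G U"
proof -
  obtain T where T: "T \<subseteq> S" "U = \<Union>T" using assms(2) by (auto simp: sstar_def)
  have "img s (cayley_rel G U) = (\<Union>V\<in>T. img s (cayley_rel G V))"
    unfolding T cayley_Union img_Union by blast
  also have "\<dots> = (\<Union>V\<in>T. cayley_rel G V)" using T assms(1) by (auto simp: schA_def)
  finally show ?thesis using T cayley_Union by metis
qed

lemma rho_schA:
  assumes "\<forall>U\<in>S. U \<subseteq> carrier G" "g \<in> carrier G"
  shows "rho G g \<in> schA G S"
proof -
  have r: "rho G g \<in> carrier BG" using rho_in assms by auto
  have ri: "rho G (inv g) \<in> carrier BG" using rho_in assms by auto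
  have "inv\<^bsub>BG\<^esub> (rho G g) = rho G (inv g)"
  proof (rule group.inv_equality[OF BG_group _ r ri])
    show "rho G (inv g) \<otimes>\<^bsub>BG\<^esub> rho G g = \<one>\<^bsub>BG\<^esub>"
      by (rule BG_eqI) (use r ri assms BG_group in \<open>auto simp: BG_mult_apply rho_apply BG_one_apply m_assoc group.is_monoid monoid.m_closed monoid.one_closed\<close>)
  qed
  moreover have "img (rho G g) (cayley_rel G U) = cayley_rel G U" if U: "U \<in> S" for U
  proof (rule img_eqI[OF r cayley_sub])
    show "U \<subseteq> carrier G" using assms U by auto
    fix a b assume "(a, b) \<in> cayley_rel G U"
    then have ab: "a \<in> carrier G" "b \<in> carrier G" "b \<otimes> inv a \<in> U" using mem_cayley assms U by auto
    have e1: "g \<otimes> (inv g \<otimes> inv a) = inv a" "inv g \<otimes> (g \<otimes> inv a) = inv a"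
      using ab assms by (simp_all add: m_assoc[symmetric])
    have "b \<otimes> g \<otimes> inv (a \<otimes> g) = b \<otimes> inv a" using ab assms e1 by (simp add: inv_mult_group m_assoc)
    moreover have "b \<otimes> inv g \<otimes> inv (a \<otimes> inv g) = b \<otimes> inv a" using ab assms e1 by (simp add: inv_mult_group m_assoc)
    ultimately show "(rho G g a, rho G g b) \<in> cayley_rel G U"
      "((inv\<^bsub>BG\<^esub> (rho G g)) a, (inv\<^bsub>BG\<^esub> (rho G g)) b) \<in> cayley_rel G U"
      using ab assms U \<open>inv\<^bsub>BG\<^esub> (rho G g) = rho G (inv g)\<close>
      by (auto simp: mem_cayley rho_apply)
  qed
  ultimately show ?thesis using r by (simp add: schA_def)
qed

lemma fix_mem:
  assumes "s \<in> carrier BG" "s \<one> = \<one>" "img s (cayley_rel G U) = cayley_rel G U"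
    "U \<subseteq> carrier G" "x \<in> U"
  shows "s x \<in> U"
proof -
  have "(\<one>, x) \<in> cayley_rel G U" using assms by (auto simp: mem_cayley)
  then have "(s \<one>, s x) \<in> cayley_rel G U" using assms(3) unfolding img_def by force
  then show ?thesis using assms by (auto simp: mem_cayley)
qed

end


locale sctx = normal H G for H and G (structure) +
  fixes S :: "'a set set"
  assumes fin: "finite (carrier G)" and Ssub: "\<forall>U\<in>S. U \<subseteq> carrier G" and HS: "H \<in> sstar S"
begin

definition Qs where "Qs = {s \<in> schA G S. \<forall>x\<in>carrier G. H #> s x = H #> x}"
definition Ps where "Ps = {s \<in> Qs. s \<one> = \<one>}"
definition orb where "orb x = {p x | p. p \<in> Ps}"

abbreviation "FG \<equiv> G Mod H"

lemma FG_group: "group FG" by (rule factorgroup_is_group)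

lemma pi_in: "a \<in> carrier G \<Longrightarrow> H #> a \<in> carrier FG"
  by (simp add: FactGroup_def rcosetsI subset)

lemma pi_mult: "a \<in> carrier G \<Longrightarrow> b \<in> carrier G \<Longrightarrow> H #> (a \<otimes> b) = (H #> a) \<otimes>\<^bsub>FG\<^esub> (H #> b)"
  by (simp add: rcos_sum)

lemma pi_hom: "group_hom G FG (\<lambda>a. H #> a)"
  using FG_group r_coset_hom_Mod is_group by (simp add: group_hom_def group_hom_axioms_def)

lemma pi_inv: "a \<in> carrier G \<Longrightarrow> H #> inv a = inv\<^bsub>FG\<^esub> (H #> a)"
  using group_hom.hom_inv[OF pi_hom] by simp

lemma pi_H: "h \<in> H \<Longrightarrow> H #> h = \<one>\<^bsub>FG\<^esub>"
  by (simp add: coset_join2 subgroup_axioms)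

lemma coset_rel:
  assumes "a \<in> carrier G" "b \<in> carrier G"
  shows "(a, b) \<in> cayley_rel G H \<longleftrightarrow> H #> a = H #> b"
proof -
  have "(a, b) \<in> cayley_rel G H \<longleftrightarrow> b \<otimes> inv a \<in> H"
    using mem_cayley[OF subgroup.subset[OF subgroup_axioms]] assms by auto
  also have "\<dots> \<longleftrightarrow> b \<in> H #> a" using rcos_module[OF is_group assms(1) assms(2)] by simp
  also have "\<dots> \<longleftrightarrow> H #> a = H #> b"
    using repr_independence[of b H a] repr_independenceD[of H b a] assms subgroup_axioms by blast
  finally show ?thesis .
qed

lemma schA_coset:
  assumes "f \<in> schA G S" "a \<in> carrier G" "b \<in> carrier G" "H #> a = H #> b"
  shows "H #> f a = H #> f b"
proof -
  have f: "f \<in> carrier BG" using assms by (simp add: schA_def)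
  have "(a, b) \<in> cayley_rel G H" using coset_rel assms by auto
  then have "(f a, f b) \<in> img f (cayley_rel G H)" unfolding img_def by force
  then have "(f a, f b) \<in> cayley_rel G H" using schA_sstar[OF assms(1) HS] by simp
  then show ?thesis using coset_rel BG_D(3)[OF f] assms by auto
qed

lemma Qs_D: "s \<in> Qs \<Longrightarrow> s \<in> carrier BG" "s \<in> Qs \<Longrightarrow> s \<in> schA G S"
  "s \<in> Qs \<Longrightarrow> x \<in> carrier G \<Longrightarrow> H #> s x = H #> x"
  by (auto simp: Qs_def schA_def)

lemma Qs_one: "\<one>\<^bsub>BG\<^esub> \<in> Qs"
  using schA_one[OF Ssub] by (simp add: Qs_def BG_one_apply)

lemma Qs_mult: assumes "s \<in> Qs" "t \<in> Qs" shows "s \<otimes>\<^bsub>BG\<^esub> t \<in> Qs"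
proof -
  have "H #> (s \<otimes>\<^bsub>BG\<^esub> t) x = H #> x" if x: "x \<in> carrier G" for x
    using Qs_D[OF assms(1)] Qs_D[OF assms(2)] x BG_D(3) by (simp add: BG_mult_apply)
  then show ?thesis using schA_mult[OF Ssub] assms by (simp add: Qs_def)
qed

lemma Qs_inv: assumes "s \<in> Qs" shows "inv\<^bsub>BG\<^esub> s \<in> Qs"
proof -
  have "H #> (inv\<^bsub>BG\<^esub> s) x = H #> x" if x: "x \<in> carrier G" for x
  proof -
    have y: "(inv\<^bsub>BG\<^esub> s) x \<in> carrier G" using BG_inv_apply(3) Qs_D(1)[OF assms] x by auto
    have "H #> (inv\<^bsub>BG\<^esub> s) x = H #> s ((inv\<^bsub>BG\<^esub> s) x)" using Qs_D(3)[OF assms y] by simp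
    also have "\<dots> = H #> x" using BG_inv_apply(2)[OF Qs_D(1)[OF assms] x] by simp
    finally show ?thesis .
  qed
  then show ?thesis using schA_inv[OF Ssub] Qs_D(2)[OF assms] by (simp add: Qs_def)
qed

lemma Qs_subgroup: "subgroup Qs BG"
  by (rule subgroup.intro) (auto intro: Qs_D Qs_one Qs_mult Qs_inv)

lemma Ps_D: "s \<in> Ps \<Longrightarrow> s \<in> Qs" "s \<in> Ps \<Longrightarrow> s \<one> = \<one>"
  by (auto simp: Ps_def)

lemma Ps_one: "\<one>\<^bsub>BG\<^esub> \<in> Ps"
  using Qs_one by (simp add: Ps_def BG_one_apply)

lemma Ps_mult: assumes "s \<in> Ps" "t \<in> Ps" shows "s \<otimes>\<^bsub>BG\<^esub> t \<in> Ps"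
  using assms Qs_mult Qs_D(1) by (simp add: Ps_def BG_mult_apply)

lemma Ps_inv: assumes "s \<in> Ps" shows "inv\<^bsub>BG\<^esub> s \<in> Ps"
  using assms Qs_inv Qs_D(1) BG_inv_apply(1)[of s \<one>] by (simp add: Ps_def)

lemma conj_Q:
  assumes f: "f \<in> schA G S" and s: "s \<in> Qs"
  shows "f \<otimes>\<^bsub>BG\<^esub> s \<otimes>\<^bsub>BG\<^esub> inv\<^bsub>BG\<^esub> f \<in> Qs"
proof -
  have fB: "f \<in> carrier BG" using f by (simp add: schA_def)
  have sB: "s \<in> carrier BG" using Qs_D(1)[OF s] .
  have fi: "inv\<^bsub>BG\<^esub> f \<in> schA G S" using schA_inv[OF Ssub f] .
  have fiB: "inv\<^bsub>BG\<^esub> f \<in> carrier BG" using fi by (simp add: schA_def)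
  have fs: "f \<otimes>\<^bsub>BG\<^esub> s \<in> carrier BG" using fB sB BG_group by (simp add: group.is_monoid monoid.m_closed)
  have "H #> (f \<otimes>\<^bsub>BG\<^esub> s \<otimes>\<^bsub>BG\<^esub> inv\<^bsub>BG\<^esub> f) x = H #> x" if x: "x \<in> carrier G" for x
  proof -
    define y where "y = (inv\<^bsub>BG\<^esub> f) x"
    have y: "y \<in> carrier G" "f y = x" using BG_inv_apply fB x y_def by auto
    have sy: "s y \<in> carrier G" using BG_D(3)[OF sB y(1)] .
    have "(f \<otimes>\<^bsub>BG\<^esub> s \<otimes>\<^bsub>BG\<^esub> inv\<^bsub>BG\<^esub> f) x = f (s y)"
      using BG_mult_apply fs fiB x fB sB y y_def by simp
    moreover have "H #> f (s y) = H #> f y"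
      using schA_coset[OF f sy y(1)] Qs_D(3)[OF s y(1)] by simp
    ultimately show ?thesis using y by simp
  qed
  moreover have "f \<otimes>\<^bsub>BG\<^esub> s \<otimes>\<^bsub>BG\<^esub> inv\<^bsub>BG\<^esub> f \<in> schA G S"
    using schA_mult[OF Ssub] f fi Qs_D(2)[OF s] by simp
  ultimately show ?thesis by (simp add: Qs_def)
qed

lemma rho_Q: assumes h: "h \<in> H" shows "rho G h \<in> Qs"
proof -
  have hc: "h \<in> carrier G" using h subset by auto
  have "H #> rho G h x = H #> x" if x: "x \<in> carrier G" for x
  proof -
    have "H #> rho G h x = (H #> x) \<otimes>\<^bsub>FG\<^esub> (H #> h)" using x hc pi_mult by (simp add: rho_apply)
    also have "\<dots> = H #> x" using pi_H[OF h] monoid.r_one[OF group.is_monoid[OF FG_group]] pi_in[OF x] by simp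
    finally show ?thesis .
  qed
  then show ?thesis using rho_schA[OF Ssub hc] by (simp add: Qs_def)
qed

lemma Q_one_H: assumes "s \<in> Qs" shows "s \<one> \<in> H"
proof -
  have c: "s \<one> \<in> carrier G" using BG_D(3) Qs_D(1)[OF assms] by simp
  have "H #> s \<one> = H" using Qs_D(3)[OF assms] coset_mult_one subset by simp
  then show ?thesis using rcos_self[OF c subgroup_axioms] by simp
qed

lemma q_lemma:
  assumes p: "p \<in> Ps" and g: "g \<in> carrier G"
  shows "\<exists>q\<in>Ps. \<forall>x\<in>carrier G. q x = p (x \<otimes> g) \<otimes> inv (p g)"
proof -
  have pB: "p \<in> carrier BG" using Qs_D(1) Ps_D(1) p by blast
  have pA: "p \<in> schA G S" using Qs_D(2) Ps_D(1) p by blast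
  have pg: "p g \<in> carrier G" using BG_D(3)[OF pB g] .
  define q where "q = rho G (inv (p g)) \<otimes>\<^bsub>BG\<^esub> p \<otimes>\<^bsub>BG\<^esub> rho G g"
  have r1: "rho G (inv (p g)) \<in> carrier BG" using rho_in pg by simp
  have r2: "rho G g \<in> carrier BG" using rho_in g by simp
  have r1p: "rho G (inv (p g)) \<otimes>\<^bsub>BG\<^esub> p \<in> carrier BG"
    using r1 pB BG_group by (simp add: group.is_monoid monoid.m_closed)
  have qx: "q x = p (x \<otimes> g) \<otimes> inv (p g)" if x: "x \<in> carrier G" for x
  proof -
    have "p (x \<otimes> g) \<in> carrier G" using BG_D(3)[OF pB] x g by simp
    then show ?thesis unfolding q_def using x g r1 r2 pB r1p pg
      by (simp add: BG_mult_apply rho_apply)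
  qed
  have qA: "q \<in> schA G S" unfolding q_def
    using schA_mult[OF Ssub] rho_schA[OF Ssub] pA g pg by simp
  have qc: "H #> q x = H #> x" if x: "x \<in> carrier G" for x
  proof -
    have xg: "x \<otimes> g \<in> carrier G" using x g by simp
    have pxg: "p (x \<otimes> g) \<in> carrier G" using BG_D(3)[OF pB xg] .
    have e1: "H #> p (x \<otimes> g) = (H #> x) \<otimes>\<^bsub>FG\<^esub> (H #> g)"
      using Qs_D(3)[OF Ps_D(1)[OF p] xg] pi_mult x g by simp
    have e2: "H #> p g = H #> g" using Qs_D(3)[OF Ps_D(1)[OF p] g] .
    have "H #> q x = (H #> p (x \<otimes> g)) \<otimes>\<^bsub>FG\<^esub> inv\<^bsub>FG\<^esub> (H #> p g)"
      using qx[OF x] pi_mult pi_inv pxg pg by simp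
    also have "\<dots> = (H #> x) \<otimes>\<^bsub>FG\<^esub> (H #> g) \<otimes>\<^bsub>FG\<^esub> inv\<^bsub>FG\<^esub> (H #> g)" using e1 e2 by simp
    also have "\<dots> = H #> x" using pi_in[OF x] pi_in[OF g] FG_group
      by (simp del: mult_FactGroup one_FactGroup add: monoid.m_assoc[OF group.is_monoid[OF FG_group]] group.r_inv[OF FG_group] group.inv_closed[OF FG_group] monoid.r_one[OF group.is_monoid[OF FG_group]])
    finally show ?thesis .
  qed
  have q1: "q \<one> = \<one>" using qx[of \<one>] g pg by simp
  have "q \<in> Ps" using qA qc q1 by (simp add: Ps_def Qs_def)
  then show ?thesis using qx by blast
qed

end


context sctx begin

lemma Ps_B: "p \<in> Ps \<Longrightarrow> p \<in> carrier BG"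
  using Qs_D(1)[OF Ps_D(1)] by blast

lemma orbI: "p \<in> Ps \<Longrightarrow> y = p x \<Longrightarrow> y \<in> orb x"
  unfolding orb_def by blast

lemma self_orb: "x \<in> carrier G \<Longrightarrow> x \<in> orb x"
  using orbI[OF Ps_one] BG_one_apply by metis

lemma orb_sub: "x \<in> carrier G \<Longrightarrow> orb x \<subseteq> carrier G"
  unfolding orb_def using Ps_B BG_D(3) by blast

lemma orb_closed:
  assumes "x \<in> carrier G" "y \<in> orb x" "p \<in> Ps" shows "p y \<in> orb x"
proof -
  obtain p' where p': "p' \<in> Ps" "y = p' x" using assms(2) unfolding orb_def by blast
  have "p y = (p \<otimes>\<^bsub>BG\<^esub> p') x" using BG_mult_apply Ps_B p' assms by simp
  then show ?thesis using orbI[OF Ps_mult[OF assms(3) p'(1)]] by metis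
qed

lemma orb_same:
  assumes "x \<in> carrier G" "y \<in> orb x" shows "orb y = orb x"
proof
  show "orb y \<subseteq> orb x" using orb_closed assms unfolding orb_def[of y] by blast
  obtain p' where p': "p' \<in> Ps" "y = p' x" using assms(2) unfolding orb_def by blast
  have y: "y \<in> carrier G" using orb_sub assms by blast
  have "x = (inv\<^bsub>BG\<^esub> p') y" using BG_inv_apply(1)[OF Ps_B[OF p'(1)] assms(1)] p' by simp
  then have "x \<in> orb y" using orbI[OF Ps_inv[OF p'(1)]] by metis
  then show "orb x \<subseteq> orb y" using orb_closed y unfolding orb_def[of x] by blast
qed

lemma orb_one: "orb \<one> = {\<one>}"
  using self_orb[of \<one>] unfolding orb_def by (auto dest: Ps_D(2))

lemma inv_in_orb:
  assumes p: "p \<in> Ps" and x: "x \<in> carrier G" shows "inv (p x) \<in> orb (inv x)"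
proof -
  obtain q where q: "q \<in> Ps" "\<forall>y\<in>carrier G. q y = p (y \<otimes> x) \<otimes> inv (p x)"
    using q_lemma[OF p x] by blast
  have px: "p x \<in> carrier G" using BG_D(3)[OF Ps_B[OF p] x] .
  have "q (inv x) = inv (p x)" using q(2) x px Ps_D(2)[OF p] by simp
  then show ?thesis using orbI[OF q(1)] by metis
qed

lemma orb_inv:
  assumes x: "x \<in> carrier G" shows "inv_set_sr G (orb x) = orb (inv x)"
proof
  show "inv_set_sr G (orb x) \<subseteq> orb (inv x)"
    unfolding inv_set_sr_def orb_def using inv_in_orb x by (auto simp: orb_def)
  show "orb (inv x) \<subseteq> inv_set_sr G (orb x)"
  proof
    fix y assume y: "y \<in> orb (inv x)"
    then obtain p where p: "p \<in> Ps" "y = p (inv x)" unfolding orb_def by blast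
    have yc: "y \<in> carrier G" using orb_sub y x by blast
    have "inv y \<in> orb x" using inv_in_orb[OF p(1), of "inv x"] x p by simp
    moreover have "y = inv (inv y)" using yc by simp
    ultimately show "y \<in> inv_set_sr G (orb x)" unfolding inv_set_sr_def by blast
  qed
qed

lemma card_le:
  assumes u: "u \<in> carrier G" and v: "v \<in> carrier G" and p: "p \<in> Ps" and z: "z \<in> carrier G"
  shows "card {(x, y). x \<in> orb u \<and> y \<in> orb v \<and> x \<otimes> y = z}
       \<le> card {(x, y). x \<in> orb u \<and> y \<in> orb v \<and> x \<otimes> y = p z}"
proof (rule card_inj_on_le)
  define phi where "phi = (\<lambda>(x, y). (p (x \<otimes> y) \<otimes> inv (p y), p y))"
  have pB: "p \<in> carrier BG" using Ps_B p .
  show "inj_on phi {(x, y). x \<in> orb u \<and> y \<in> orb v \<and> x \<otimes> y = z}"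
  proof (rule inj_onI)
    fix a b assume a: "a \<in> {(x, y). x \<in> orb u \<and> y \<in> orb v \<and> x \<otimes> y = z}"
      and b: "b \<in> {(x, y). x \<in> orb u \<and> y \<in> orb v \<and> x \<otimes> y = z}" and e: "phi a = phi b"
    obtain a1 a2 b1 b2 where ab: "a = (a1, a2)" "b = (b1, b2)" by (cases a, cases b)
    have c: "a1 \<in> carrier G" "a2 \<in> carrier G" "b1 \<in> carrier G" "b2 \<in> carrier G"
      using a b ab orb_sub u v by auto
    have "p a2 = p b2" using e ab unfolding phi_def by simp
    then have "a2 = b2" using BG_D(1)[OF pB] c unfolding bij_betw_def inj_on_def by blast
    moreover have "a1 \<otimes> a2 = b1 \<otimes> b2" using a b ab by simp
    ultimately have "a1 = b1" using c by simp
    then show "a = b" using ab \<open>a2 = b2\<close> by simp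
  qed
  show "phi ` {(x, y). x \<in> orb u \<and> y \<in> orb v \<and> x \<otimes> y = z}
      \<subseteq> {(x, y). x \<in> orb u \<and> y \<in> orb v \<and> x \<otimes> y = p z}"
  proof
    fix w assume "w \<in> phi ` {(x, y). x \<in> orb u \<and> y \<in> orb v \<and> x \<otimes> y = z}"
    then obtain x y where xy: "x \<in> orb u" "y \<in> orb v" "x \<otimes> y = z" "w = phi (x, y)" by blast
    have c: "x \<in> carrier G" "y \<in> carrier G" using xy orb_sub u v by auto
    obtain q where q: "q \<in> Ps" "\<forall>t\<in>carrier G. q t = p (t \<otimes> y) \<otimes> inv (p y)"
      using q_lemma[OF p c(2)] by blast
    have 1: "p (x \<otimes> y) \<otimes> inv (p y) \<in> orb u" using q orb_closed[OF u xy(1) q(1)] c by simp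
    have 2: "p y \<in> orb v" using orb_closed[OF v xy(2) p] .
    have pc: "p y \<in> carrier G" "p (x \<otimes> y) \<in> carrier G" using BG_D(3)[OF pB] c by auto
    have 3: "p (x \<otimes> y) \<otimes> inv (p y) \<otimes> p y = p z" using xy pc by (simp add: m_assoc)
    show "w \<in> {(x, y). x \<in> orb u \<and> y \<in> orb v \<and> x \<otimes> y = p z}"
      using 1 2 3 xy(4) unfolding phi_def by simp
  qed
  have "{(x, y). x \<in> orb u \<and> y \<in> orb v \<and> x \<otimes> y = p z} \<subseteq> carrier G \<times> carrier G"
    using orb_sub u v by auto
  then show "finite {(x, y). x \<in> orb u \<and> y \<in> orb v \<and> x \<otimes> y = p z}"
    using fin finite_subset by blast
qed

definition S2 where "S2 = orb ` carrier G"

lemma S2_sub: "\<forall>U\<in>S2. U \<subseteq> carrier G"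
  unfolding S2_def using orb_sub by blast

lemma S2_sring: "is_sring G S2"
  unfolding is_sring_def
proof (intro conjI)
  show "\<forall>U\<in>S2. U \<noteq> {}" unfolding S2_def using self_orb by blast
  show "\<forall>U\<in>S2. \<forall>V\<in>S2. U \<noteq> V \<longrightarrow> U \<inter> V = {}"
  proof (intro ballI impI)
    fix U V assume "U \<in> S2" "V \<in> S2" "U \<noteq> V"
    then obtain a b where ab: "a \<in> carrier G" "b \<in> carrier G" "U = orb a" "V = orb b"
      unfolding S2_def by blast
    show "U \<inter> V = {}"
    proof (rule ccontr)
      assume "U \<inter> V \<noteq> {}"
      then obtain z where "z \<in> orb a" "z \<in> orb b" using ab by blast
      then have "orb a = orb b" using orb_same[OF ab(1)] orb_same[OF ab(2)] by metis
      then show False using ab \<open>U \<noteq> V\<close> by simp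
    qed
  qed
  show "\<Union> S2 = carrier G" unfolding S2_def using orb_sub self_orb by blast
  show "{\<one>} \<in> S2" unfolding S2_def using orb_one by force
  show "\<forall>U\<in>S2. inv_set_sr G U \<in> S2" unfolding S2_def using orb_inv by auto
  show "\<forall>U\<in>S2. \<forall>V\<in>S2. \<forall>W\<in>S2. \<forall>z1\<in>W. \<forall>z2\<in>W.
        card {(x, y). x \<in> U \<and> y \<in> V \<and> x \<otimes> y = z1}
      = card {(x, y). x \<in> U \<and> y \<in> V \<and> x \<otimes> y = z2}"
  proof (intro ballI)
    fix U V W z1 z2 assume U: "U \<in> S2" and V: "V \<in> S2" and W: "W \<in> S2"
      and z1: "z1 \<in> W" and z2: "z2 \<in> W"
    obtain u v w where uvw: "u \<in> carrier G" "v \<in> carrier G" "w \<in> carrier G"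
      "U = orb u" "V = orb v" "W = orb w" using U V W unfolding S2_def by blast
    have zc: "z1 \<in> carrier G" "z2 \<in> carrier G" using z1 z2 orb_sub uvw by auto
    have "orb z1 = orb z2" using orb_same uvw z1 z2 by metis
    then have "z2 \<in> orb z1" "z1 \<in> orb z2" using self_orb zc by auto
    then obtain p1 p2 where p: "p1 \<in> Ps" "z2 = p1 z1" "p2 \<in> Ps" "z1 = p2 z2"
      unfolding orb_def by blast
    show "card {(x, y). x \<in> U \<and> y \<in> V \<and> x \<otimes> y = z1}
      = card {(x, y). x \<in> U \<and> y \<in> V \<and> x \<otimes> y = z2}"
    proof (rule antisym)
      show "card {(x, y). x \<in> U \<and> y \<in> V \<and> x \<otimes> y = z1}
        \<le> card {(x, y). x \<in> U \<and> y \<in> V \<and> x \<otimes> y = z2}"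
        using card_le[OF uvw(1,2) p(1) zc(1)] uvw(4,5) by (simp only: p(2)[symmetric])
      show "card {(x, y). x \<in> U \<and> y \<in> V \<and> x \<otimes> y = z2}
        \<le> card {(x, y). x \<in> U \<and> y \<in> V \<and> x \<otimes> y = z1}"
        using card_le[OF uvw(1,2) p(3) zc(2)] uvw(4,5) by (simp only: p(4)[symmetric])
    qed
  qed
qed

lemma closed_sstar:
  assumes "U \<subseteq> carrier G" "\<And>x p. x \<in> U \<Longrightarrow> p \<in> Ps \<Longrightarrow> p x \<in> U"
  shows "U \<in> sstar S2"
proof -
  have "\<Union>(orb ` U) = U"
  proof
    show "\<Union>(orb ` U) \<subseteq> U" unfolding orb_def using assms(2) by blast
    show "U \<subseteq> \<Union>(orb ` U)" using self_orb assms(1) by blast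
  qed
  moreover have "orb ` U \<subseteq> S2" unfolding S2_def using assms(1) by blast
  ultimately show ?thesis unfolding sstar_def by blast
qed

lemma sstarS_S2: "sstar S \<subseteq> sstar S2"
proof
  fix U assume "U \<in> sstar S"
  then obtain T where T: "T \<subseteq> S" "U = \<Union>T" unfolding sstar_def by blast
  show "U \<in> sstar S2"
  proof (rule closed_sstar)
    show "U \<subseteq> carrier G" using T Ssub by blast
    fix x p assume x: "x \<in> U" and p: "p \<in> Ps"
    obtain Y0 where Y0: "Y0 \<in> T" "x \<in> Y0" using T x by blast
    have "img p (cayley_rel G Y0) = cayley_rel G Y0"
      using Qs_D(2)[OF Ps_D(1)[OF p]] Y0 T unfolding schA_def by blast
    then have "p x \<in> Y0" using fix_mem[OF Ps_B[OF p] Ps_D(2)[OF p]] Y0 T Ssub by blast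
    then show "p x \<in> U" using Y0 T by blast
  qed
qed

lemma rcos_S2: "rcosets H \<subseteq> sstar S2"
proof
  fix M assume "M \<in> rcosets H"
  then obtain a where a: "a \<in> carrier G" "M = H #> a" unfolding RCOSETS_def by blast
  show "M \<in> sstar S2"
  proof (rule closed_sstar)
    show "M \<subseteq> carrier G" using a r_coset_subset_G subset by blast
    fix x p assume x: "x \<in> M" and p: "p \<in> Ps"
    have xc: "x \<in> carrier G" using x a r_coset_subset_G subset by blast
    have px: "p x \<in> carrier G" using BG_D(3)[OF Ps_B[OF p] xc] .
    have "H #> a = H #> x" using repr_independence[of x H a] x a subgroup_axioms by blast
    moreover have "H #> p x = H #> x" using Qs_D(3)[OF Ps_D(1)[OF p] xc] .
    ultimately show "p x \<in> M" using rcos_self[OF px subgroup_axioms] a by simp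
  qed
qed

lemma Ps_pres:
  assumes p: "p \<in> Ps" and U: "U \<in> S2" shows "img p (cayley_rel G U) = cayley_rel G U"
proof -
  obtain u where u: "u \<in> carrier G" "U = orb u" using U unfolding S2_def by blast
  have Uc: "U \<subseteq> carrier G" using orb_sub u by simp
  have key: "(r a, r b) \<in> cayley_rel G U" if r: "r \<in> Ps" and ab: "(a, b) \<in> cayley_rel G U" for r a b
  proof -
    have c: "a \<in> carrier G" "b \<in> carrier G" "b \<otimes> inv a \<in> U" using ab mem_cayley[OF Uc] by auto
    obtain q where q: "q \<in> Ps" "\<forall>t\<in>carrier G. q t = r (t \<otimes> a) \<otimes> inv (r a)"
      using q_lemma[OF r c(1)] by blast
    have "q (b \<otimes> inv a) = r b \<otimes> inv (r a)" using q(2) c by (simp add: m_assoc)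
    moreover have "q (b \<otimes> inv a) \<in> U" using orb_closed[OF u(1) _ q(1)] c u by simp
    moreover have "r a \<in> carrier G" "r b \<in> carrier G" using BG_D(3)[OF Ps_B[OF r]] c by auto
    ultimately show ?thesis using mem_cayley[OF Uc] by simp
  qed
  show ?thesis
    by (rule img_eqI[OF Ps_B[OF p] cayley_sub[OF Uc]]) (use key p Ps_inv in blast)+
qed

lemma Ps_schA2: "p \<in> Ps \<Longrightarrow> p \<in> schA G S2"
  using Ps_pres Ps_B unfolding schA_def by blast

lemma aut_eq:
  assumes gen: "sring_generated_by G S (rcosets H) S'"
  shows "sring_aut G S' = Ps"
proof -
  have S'r: "is_sring G S'" and incl: "sstar S \<union> rcosets H \<subseteq> sstar S'"
    using gen unfolding sring_generated_by_def by auto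
  have min: "sstar S' \<subseteq> sstar S2"
    using gen S2_sring sstarS_S2 rcos_S2 unfolding sring_generated_by_def by blast
  have S'sub: "\<forall>U\<in>S'. U \<subseteq> carrier G" using S'r unfolding is_sring_def by blast
  have single: "U \<in> sstar S'" if "U \<in> S'" for U
    using that unfolding sstar_def by (intro CollectI exI[of _ "{U}"]) auto
  have single2: "U \<in> sstar S" if "U \<in> S" for U
    using that unfolding sstar_def by (intro CollectI exI[of _ "{U}"]) auto
  show ?thesis
  proof
    show "Ps \<subseteq> sring_aut G S'"
    proof
      fix p assume p: "p \<in> Ps"
      have "img p (cayley_rel G U) = cayley_rel G U" if U: "U \<in> S'" for U
        using schA_sstar[OF Ps_schA2[OF p]] single[OF U] min by blast
      then show "p \<in> sring_aut G S'" using Ps_B[OF p] Ps_D(2)[OF p]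
        unfolding sring_aut_eq schA_def by blast
    qed
    show "sring_aut G S' \<subseteq> Ps"
    proof
      fix s assume s: "s \<in> sring_aut G S'"
      have sA': "s \<in> schA G S'" and s1: "s \<one> = \<one>" using s unfolding sring_aut_eq by auto
      have sB: "s \<in> carrier BG" using sA' unfolding schA_def by blast
      have "img s (cayley_rel G Y0) = cayley_rel G Y0" if Y0: "Y0 \<in> S" for Y0
        using schA_sstar[OF sA'] single2[OF Y0] incl by blast
      then have sA: "s \<in> schA G S" using sB unfolding schA_def by blast
      have "H #> s x = H #> x" if x: "x \<in> carrier G" for x
      proof -
        have M: "H #> x \<in> sstar S'" using incl rcosetsI[OF subset x] by blast
        have Mc: "H #> x \<subseteq> carrier G" using r_coset_subset_G subset x by blast
        have sx: "s x \<in> carrier G" using BG_D(3)[OF sB x] .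
        have "s x \<in> H #> x"
          using fix_mem[OF sB s1 schA_sstar[OF sA' M] Mc rcos_self[OF x subgroup_axioms]] .
        then show ?thesis using repr_independence[of "s x" H x] x subgroup_axioms by simp
      qed
      then show "s \<in> Ps" using sA s1 unfolding Ps_def Qs_def by blast
    qed
  qed
qed

lemma rt_Q: "right_transl G H \<subseteq> Qs"
  unfolding right_transl_def using rho_Q unfolding rho_def by blast

lemma gen_eq: "generate BG (Ps \<union> right_transl G H) = Qs"
proof
  have "Ps \<subseteq> Qs" using Ps_D(1) by blast
  then show "generate BG (Ps \<union> right_transl G H) \<subseteq> Qs"
    using group.generate_subgroup_incl[OF BG_group _ Qs_subgroup] rt_Q by blast
  show "Qs \<subseteq> generate BG (Ps \<union> right_transl G H)"
  proof
    fix s assume s: "s \<in> Qs"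
    define h where "h = s \<one>"
    have h: "h \<in> H" using Q_one_H[OF s] h_def by simp
    have hc: "h \<in> carrier G" "inv h \<in> carrier G" using h subset by auto
    have ih: "inv h \<in> H" using h subgroup_axioms by (simp add: subgroup.m_inv_closed)
    define t where "t = rho G (inv h) \<otimes>\<^bsub>BG\<^esub> s"
    have sB: "s \<in> carrier BG" using Qs_D(1)[OF s] .
    have tQ: "t \<in> Qs" unfolding t_def using Qs_mult[OF rho_Q[OF ih] s] .
    have t1: "t \<one> = \<one>" unfolding t_def
      using BG_mult_apply[OF rho_in[OF hc(2)] sB] BG_D(3)[OF sB] hc h_def by (simp add: rho_apply)
    have tP: "t \<in> Ps" using tQ t1 unfolding Ps_def by blast
    have tB: "t \<in> carrier BG" using Qs_D(1)[OF tQ] .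
    have rh: "rho G h \<in> right_transl G H" unfolding right_transl_def rho_def using h by blast
    have "s = rho G h \<otimes>\<^bsub>BG\<^esub> t"
    proof (rule BG_eqI[OF sB])
      show "rho G h \<otimes>\<^bsub>BG\<^esub> t \<in> carrier BG"
        using rho_in[OF hc(1)] tB BG_group by (simp add: group.is_monoid monoid.m_closed)
      fix x assume x: "x \<in> carrier G"
      have sx: "s x \<in> carrier G" using BG_D(3)[OF sB x] .
      have "(rho G h \<otimes>\<^bsub>BG\<^esub> t) x = s x \<otimes> inv h \<otimes> h"
        unfolding t_def using x sx hc rho_in sB BG_group BG_D(3)
        by (simp add: BG_mult_apply rho_apply group.is_monoid monoid.m_closed)
      also have "\<dots> = s x" using sx hc by (simp add: m_assoc)
      finally show "s x = (rho G h \<otimes>\<^bsub>BG\<^esub> t) x" by simp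
    qed
    moreover have "rho G h \<in> generate BG (Ps \<union> right_transl G H)" using rh by (blast intro: generate.incl)
    moreover have "t \<in> generate BG (Ps \<union> right_transl G H)" using tP by (blast intro: generate.incl)
    ultimately show "s \<in> generate BG (Ps \<union> right_transl G H)" by (metis generate.eng)
  qed
qed

lemma conj_eq:
  assumes f: "f \<in> schA G S"
  shows "(\<lambda>k. f \<otimes>\<^bsub>BG\<^esub> k \<otimes>\<^bsub>BG\<^esub> inv\<^bsub>BG\<^esub> f) ` Qs = Qs"
proof
  show "(\<lambda>k. f \<otimes>\<^bsub>BG\<^esub> k \<otimes>\<^bsub>BG\<^esub> inv\<^bsub>BG\<^esub> f) ` Qs \<subseteq> Qs" using conj_Q[OF f] by blast
  show "Qs \<subseteq> (\<lambda>k. f \<otimes>\<^bsub>BG\<^esub> k \<otimes>\<^bsub>BG\<^esub> inv\<^bsub>BG\<^esub> f) ` Qs"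
  proof
    fix s assume s: "s \<in> Qs"
    have fB: "f \<in> carrier BG" using f unfolding schA_def by blast
    have fi: "inv\<^bsub>BG\<^esub> f \<in> schA G S" using schA_inv[OF Ssub f] .
    define t where "t = inv\<^bsub>BG\<^esub> f \<otimes>\<^bsub>BG\<^esub> s \<otimes>\<^bsub>BG\<^esub> inv\<^bsub>BG\<^esub> (inv\<^bsub>BG\<^esub> f)"
    have tQ: "t \<in> Qs" unfolding t_def using conj_Q[OF fi s] .
    have sB: "s \<in> carrier BG" using Qs_D(1)[OF s] .
    have c': "f \<otimes>\<^bsub>BG\<^esub> (inv\<^bsub>BG\<^esub> f \<otimes>\<^bsub>BG\<^esub> s) = s"
      using fB sB BG_group by (simp add: monoid.m_assoc[symmetric] group.r_inv group.inv_closed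
        group.is_monoid monoid.l_one)
    have "f \<otimes>\<^bsub>BG\<^esub> t \<otimes>\<^bsub>BG\<^esub> inv\<^bsub>BG\<^esub> f = s"
      unfolding t_def using fB sB BG_group c'
      by (simp add: group.inv_inv group.inv_closed monoid.m_assoc group.is_monoid group.r_inv
          group.l_inv monoid.m_closed monoid.l_one monoid.r_one)
    then show "s \<in> (\<lambda>k. f \<otimes>\<^bsub>BG\<^esub> k \<otimes>\<^bsub>BG\<^esub> inv\<^bsub>BG\<^esub> f) ` Qs" using tQ by force
  qed
qed

end

theorem theorem7p2:
  fixes G :: "('a, 'b) monoid_scheme" and S S' :: "'a set set" and H :: "'a set"
  assumes "group G"
    and "finite (carrier G)"
    and "is_sring G S"
    and "H \<lhd> G"
    and "H \<in> sring_subgroups G S"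
    and "sring_generated_by G S (rcosets\<^bsub>G\<^esub> H) S'"
  shows "\<forall>f \<in> sring_aut G S.
           (\<lambda>k. f \<otimes>\<^bsub>BijGroup (carrier G)\<^esub> k \<otimes>\<^bsub>BijGroup (carrier G)\<^esub> inv\<^bsub>BijGroup (carrier G)\<^esub> f)
             ` generate (BijGroup (carrier G)) (sring_aut G S' \<union> right_transl G H)
         = generate (BijGroup (carrier G)) (sring_aut G S' \<union> right_transl G H)"
proof -
  have Ssub: "\<forall>U\<in>S. U \<subseteq> carrier G" using assms(3) unfolding is_sring_def by blast
  have HS: "H \<in> sstar S" using assms(5) unfolding sring_subgroups_def by blast
  interpret sctx H G S
    using assms(4) assms(2) Ssub HS by (simp add: sctx_def sctx_axioms_def)
  show ?thesis
    using aut_eq[OF assms(6)] gen_eq conj_eq unfolding sring_aut_eq by auto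
qed

end
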